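(* Let $g \colon \mathbb{R}^n \to \mathbb{R}^m$ ($m \le n$) be smooth, let $M = g^{-1}(0)$, and assume the Jacobian of $g$ has maximal rank at every point of $M$. Let $q_0, q_N \in M$. Consider the optimal control problem of extremising the cost functional \[ J(u,\lambda) = \int_0^1 \left( \tfrac{1}{2} \|u(t)\|^2 - g(q(t))^\top \lambda(t) \right) \mathrm{d} t \] over controls $(u,\lambda) \in \mathcal{C}^\infty([0,1],\mathbb{R}^n\times \mathbb{R}^m)$, where the associated state $q \in \mathcal{C}^\infty([0,1],\mathbb{R}^n)$ satisfies the state equation $\dot q = u$ with $q(0)=q_0$, $q(1)=q_N$. Then for any optimal control $(u,\lambda) \in \mathcal{C}^\infty([0,1],\mathbb{R}^n\times \mathbb{R}^m)$ with associated state trajectory $q$ there exists a costate trajectory $p\colon[0,1]\to\mathbb{R}^n$ such that \[ \dot{q}=u,\qquad \dot{p}=-g'(q)^\top \lambda, \] subject to the algebraic constraints $g(q)=0$, $p=u$, and the boundary conditions $q(0)=q_0$, $q(1)=q_N$.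
   Context: $\|\cdot\|$ is the Euclidean norm on $\mathbb{R}^n$, $g'(q)$ denotes the Jacobian matrix of $g$ at $q$ (an $m\times n$ matrix), and $^\top$ denotes transposition. *)

theory Defs
  imports "HOL-Analysis.Analysis"
begin

fun Ck_scalar :: "nat \<Rightarrow> (real^'n \<Rightarrow> real) \<Rightarrow> bool" where
  "Ck_scalar 0 f = continuous_on UNIV f"
| "Ck_scalar (Suc k) f = (continuous_on UNIV f \<and>
     (\<forall>i. \<exists>D. (\<forall>x. ((\<lambda>s. f (x + s *\<^sub>R axis i 1)) has_real_derivative D x) (at 0))
              \<and> Ck_scalar k D))"

definition smooth_map :: "(real^'n \<Rightarrow> real^'m) \<Rightarrow> bool" where
  "smooth_map g \<longleftrightarrow> (\<forall>k j. Ck_scalar k (\<lambda>x. g x $ j))"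

definition smooth_on_01 :: "(real \<Rightarrow> 'a::real_normed_vector) \<Rightarrow> bool" where
  "smooth_on_01 f \<longleftrightarrow> (\<exists>F::nat \<Rightarrow> real \<Rightarrow> 'a. (\<forall>t\<in>{0..1}. F 0 t = f t) \<and>
      (\<forall>k. \<forall>t\<in>{0..1}. (F k has_vector_derivative F (Suc k) t) (at t within {0..1})))"

definition jacobian :: "(real^'n \<Rightarrow> real^'m) \<Rightarrow> real^'n \<Rightarrow> real^'n^'m" where
  "jacobian g q = matrix (frechet_derivative g (at q))"

definition state :: "real^'n \<Rightarrow> (real \<Rightarrow> real^'n) \<Rightarrow> real \<Rightarrow> real^'n" where
  "state q0 u t = q0 + integral {0..t} u"

definition cost :: "(real^'n \<Rightarrow> real^'m) \<Rightarrow> real^'n \<Rightarrow> (real \<Rightarrow> real^'n) \<Rightarrow> (real \<Rightarrow> real^'m) \<Rightarrow> real" where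
  "cost g q0 u lam = integral {0..1}
     (\<lambda>t. (1/2) * (norm (u t))\<^sup>2 - g (state q0 u t) \<bullet> lam t)"

definition admissible :: "real^'n \<Rightarrow> real^'n \<Rightarrow> (real \<Rightarrow> real^'n) \<Rightarrow> (real \<Rightarrow> real^'m) \<Rightarrow> bool" where
  "admissible q0 qN u lam \<longleftrightarrow> smooth_on_01 u \<and> smooth_on_01 lam \<and> state q0 u 1 = qN"

text \<open>Optimal (extremal) control: a critical point of J among admissible controls, i.e. the first
  variation vanishes in every admissible direction (v, mu): smooth, with v preserving the endpoint.\<close>
definition optimal_control :: "(real^'n \<Rightarrow> real^'m) \<Rightarrow> real^'n \<Rightarrow> real^'n
     \<Rightarrow> (real \<Rightarrow> real^'n) \<Rightarrow> (real \<Rightarrow> real^'m) \<Rightarrow> bool" where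
  "optimal_control g q0 qN u lam \<longleftrightarrow> admissible q0 qN u lam \<and>
     (\<forall>v mu. smooth_on_01 v \<and> smooth_on_01 mu \<and> integral {0..1} v = 0 \<longrightarrow>
        ((\<lambda>e. cost g q0 (\<lambda>t. u t + e *\<^sub>R v t) (\<lambda>t. lam t + e *\<^sub>R mu t)) has_real_derivative 0) (at 0))"

end

theory Submission
  imports Defs
begin


lemma poly_orth:
  fixes h :: "real \<Rightarrow> real"
  assumes hc: "continuous_on {0..1} h"
    and orth: "\<And>p::real\<Rightarrow>real. real_polynomial_function p \<Longrightarrow> integral {0..1} (\<lambda>t. p t * h t) = 0"
  shows "\<forall>t\<in>{0..1}. h t = 0"
proof -
  define C where "C = integral {0..1} (\<lambda>t. \<bar>h t\<bar>)"
  have hint: "(\<lambda>t. h t * h t) integrable_on {0..1}"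
    by (intro integrable_continuous_interval continuous_intros hc)
  have le: "integral {0..1} (\<lambda>t. h t * h t) \<le> e * C" if e: "e > 0" for e
  proof -
    obtain p :: "real \<Rightarrow> real" where p: "real_polynomial_function p" "\<And>x. x \<in> {0..1} \<Longrightarrow> \<bar>h x - p x\<bar> < e"
      using Stone_Weierstrass_real_polynomial_function[OF compact_Icc hc e] by blast
    have pc: "continuous_on {0..1} p"
      using p(1) continuous_on_polymonial_function real_polynomial_function_eq by blast
    have "integral {0..1} (\<lambda>t. h t * h t) = integral {0..1} (\<lambda>t. h t * (h t - p t)) + integral {0..1} (\<lambda>t. p t * h t)"
      by (subst integral_add[symmetric]) (auto intro!: integrable_continuous_interval continuous_intros hc pc simp: algebra_simps)
    also have "\<dots> = integral {0..1} (\<lambda>t. h t * (h t - p t))" using orth[OF p(1)] by simp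
    also have "\<dots> \<le> integral {0..1} (\<lambda>t. e * \<bar>h t\<bar>)"
    proof (rule integral_le)
      show "(\<lambda>t. h t * (h t - p t)) integrable_on {0..1}"
        by (auto intro!: integrable_continuous_interval continuous_intros hc pc)
      show "(\<lambda>t. e * \<bar>h t\<bar>) integrable_on {0..1}"
        by (auto intro!: integrable_continuous_interval continuous_intros hc pc)
      fix t :: real assume t: "t \<in> {0..1}"
      have "h t * (h t - p t) \<le> \<bar>h t\<bar> * \<bar>h t - p t\<bar>" by (metis abs_ge_self abs_mult)
      also have "\<dots> \<le> \<bar>h t\<bar> * e" using p(2)[OF t] by (intro mult_left_mono) auto
      finally show "h t * (h t - p t) \<le> e * \<bar>h t\<bar>" by (simp add: mult.commute)
    qed
    also have "\<dots> = e * C" unfolding C_def by simp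
    finally show ?thesis .
  qed
  have C0: "C \<ge> 0" unfolding C_def
    by (rule integral_nonneg) (auto intro!: integrable_continuous_interval continuous_intros hc)
  have "integral {0..1} (\<lambda>t. h t * h t) \<le> 0"
  proof (rule field_le_epsilon[where y = 0, simplified]) 
    fix e :: real assume "e > 0"
    then have "e / (C + 1) > 0" using C0 by auto
    from le[OF this] have "integral {0..1} (\<lambda>t. h t * h t) \<le> e / (C+1) * C" .
    also have "\<dots> \<le> e" using C0 \<open>e>0\<close> by (simp add: field_simps)
    finally show "integral {0..1} (\<lambda>t. h t * h t) \<le> e" .
  qed
  moreover have "integral {0..1} (\<lambda>t. h t * h t) \<ge> 0"
    by (rule integral_nonneg[OF hint]) auto
  ultimately have "integral {0..1} (\<lambda>t. h t * h t) = 0" by linarith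
  then have hi: "((\<lambda>t. h t * h t) has_integral 0) (cbox 0 1)"
    using hint by (metis box_real(2) has_integral_integrable_integral)
  show ?thesis
  proof
    fix t :: real assume t: "t \<in> {0..1}"
    have "h t * h t = 0"
      by (rule has_integral_0_cbox_imp_0[OF _ _ hi]) 
         (use t hc in \<open>auto intro!: continuous_intros simp: box_real\<close>)
    then show "h t = 0" by simp
  qed
qed

lemma const_orth:
  fixes h :: "real \<Rightarrow> real"
  assumes hc: "continuous_on {0..1} h"
    and orth: "\<And>p::real\<Rightarrow>real. real_polynomial_function p \<Longrightarrow> integral {0..1} p = 0 \<Longrightarrow> integral {0..1} (\<lambda>t. p t * h t) = 0"
  shows "\<forall>t\<in>{0..1}. h t = integral {0..1} h"
proof -
  define c where "c = integral {0..1} h"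
  have "\<forall>t\<in>{0..1}. h t - c = 0"
  proof (rule poly_orth)
    show "continuous_on {0..1} (\<lambda>t. h t - c)" by (intro continuous_intros hc)
    fix p :: "real \<Rightarrow> real" assume p: "real_polynomial_function p"
    have pc: "continuous_on {0..1} p"
      using p continuous_on_polymonial_function real_polynomial_function_eq by blast
    define a where "a = integral {0..1} p"
    have ip: "p integrable_on {0..1}" "h integrable_on {0..1}" "(\<lambda>t. p t * h t) integrable_on {0..1}"
      by (auto intro!: integrable_continuous_interval continuous_intros hc pc)
    have "real_polynomial_function (\<lambda>t. p t - a)" using p by auto
    moreover have "integral {0..1} (\<lambda>t. p t - a) = 0"
      using ip by (subst integral_diff) (auto simp: a_def)
    ultimately have "integral {0..1} (\<lambda>t. (p t - a) * h t) = 0" by (rule orth)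
    moreover have "integral {0..1} (\<lambda>t. (p t - a) * h t) = integral {0..1} (\<lambda>t. p t * h t) - a * c"
      unfolding left_diff_distrib c_def
      using integral_diff[OF ip(3) integrable_on_cmult_left[OF ip(2)], of a] by simp
    moreover have "integral {0..1} (\<lambda>t. p t * (h t - c)) = integral {0..1} (\<lambda>t. p t * h t) - c * a"
      unfolding right_diff_distrib a_def
      using integral_diff[OF ip(3) integrable_on_cmult_right[OF ip(1)], of c] by (simp add: mult.commute)
    ultimately show "integral {0..1} (\<lambda>t. p t * (h t - c)) = 0" by (simp add: mult.commute)
  qed
  then show ?thesis unfolding c_def by simp
qed

lemma poly_smooth:
  fixes c :: "'a::real_normed_vector" and p :: "real \<Rightarrow> real"
  assumes p: "real_polynomial_function p"
  shows "smooth_on_01 (\<lambda>t. p t *\<^sub>R c)"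
proof -
  define der where "der q = (SOME q'. real_polynomial_function q' \<and> (\<forall>x. (q has_real_derivative q' x) (at x)))" for q :: "real \<Rightarrow> real"
  have derp: "real_polynomial_function (der q) \<and> (\<forall>x. (q has_real_derivative der q x) (at x))"
    if "real_polynomial_function q" for q
    using has_real_derivative_polynomial_function[OF that] unfolding der_def by (rule someI_ex)
  have allp: "real_polynomial_function ((der ^^ k) p)" for k
    by (induction k) (auto simp: p derp)
  show ?thesis unfolding smooth_on_01_def
  proof (intro exI[of _ "\<lambda>k t. (der ^^ k) p t *\<^sub>R c"] conjI ballI allI)
    fix k and t :: real
    have D: "((der ^^ k) p has_real_derivative (der ^^ Suc k) p t) (at t)"
      using derp[OF allp[of k]] by simp
    show "((\<lambda>t. (der ^^ k) p t *\<^sub>R c) has_vector_derivative (der ^^ Suc k) p t *\<^sub>R c) (at t within {0..1})"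
    proof -
      have "((\<lambda>t. (der ^^ k) p t *\<^sub>R c) has_vector_derivative (der ^^ k) p t *\<^sub>R 0 + (der ^^ Suc k) p t *\<^sub>R c) (at t)"
        by (rule has_vector_derivative_scaleR[OF D has_vector_derivative_const])
      then show ?thesis using has_vector_derivative_at_within by fastforce
    qed
  qed simp
qed



lemma mvt_abs:
  fixes \<phi> :: "real \<Rightarrow> real"
  assumes d: "\<And>s. (\<phi> has_real_derivative \<phi>' s) (at s)"
  shows "\<exists>z. \<bar>z\<bar> \<le> \<bar>t\<bar> \<and> \<phi> t - \<phi> 0 = t * \<phi>' z"
proof (cases t "0::real" rule: linorder_cases)
  case less
  then obtain z where "t < z" "z < 0" "\<phi> 0 - \<phi> t = (0 - t) * \<phi>' z"
    using MVT2[of t 0 \<phi> \<phi>'] d by blast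
  then show ?thesis by (intro exI[of _ z]) (auto simp: algebra_simps)
next
  case equal then show ?thesis by auto
next
  case greater
  then obtain z where "0 < z" "z < t" "\<phi> t - \<phi> 0 = (t - 0) * \<phi>' z"
    using MVT2[of 0 t \<phi> \<phi>'] d by blast
  then show ?thesis by (intro exI[of _ z]) auto
qed

lemma c1_partial_step:
  fixes f :: "real^'n \<Rightarrow> real"
  assumes pd: "\<And>i x. ((\<lambda>s. f (x + s *\<^sub>R axis i 1)) has_real_derivative D i x) (at 0)"
  shows "((\<lambda>s. f (a + s *\<^sub>R axis i 1)) has_real_derivative D i (a + s0 *\<^sub>R axis i 1)) (at s0)"
proof -
  have "((\<lambda>s. f ((a + s0 *\<^sub>R axis i 1) + s *\<^sub>R axis i 1)) has_real_derivative D i (a + s0 *\<^sub>R axis i 1)) (at 0)"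
    by (rule pd)
  then have "((\<lambda>s. f (a + (s + s0) *\<^sub>R axis i 1)) has_real_derivative D i (a + s0 *\<^sub>R axis i 1)) (at 0)"
    by (simp add: scaleR_add_left algebra_simps)
  then show ?thesis using DERIV_shift[of "\<lambda>s. f (a + s *\<^sub>R axis i 1)" _ 0 s0] by simp
qed

lemma c1_diff_induct:
  fixes f :: "real^'n \<Rightarrow> real"
  assumes pd: "\<And>i x. ((\<lambda>s. f (x + s *\<^sub>R axis i 1)) has_real_derivative D i x) (at 0)"
    and dc: "\<And>i. continuous_on UNIV (D i)"
  shows "((\<lambda>h. f (x + (\<chi> i. if i \<in> S then h$i else 0))) has_derivative (\<lambda>h. \<Sum>i\<in>S. h$i * D i x)) (at 0)"
proof (induction S rule: infinite_finite_induct)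
  case (infinite A)
  then show ?case by simp
next
  case empty
  have "(\<chi> i. 0) = (0::real^'n)" by (simp add: vec_eq_iff)
  then show ?case by simp
next
  case (insert k S)
  let ?P = "\<lambda>S h. (\<chi> i. if i \<in> S then h$i else 0) :: real^'n"
  let ?L = "\<lambda>S h. \<Sum>i\<in>S. h$i * D i x"
  have bl: "bounded_linear (?L (insert k S))"
    by (intro bounded_linear_sum bounded_linear_compose[OF bounded_linear_mult_left] bounded_linear_vec_nth)
  show ?case unfolding has_derivative_at_alt
  proof (intro conjI allI impI bl)
    fix e :: real assume e: "e > 0"
    obtain d1 where d1: "d1 > 0" "\<And>y. norm (y - 0) < d1 \<Longrightarrow>
        norm (f (x + ?P S y) - f (x + ?P S 0) - ?L S (y - 0)) \<le> e/2 * norm (y - 0)"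
      using insert.IH[unfolded has_derivative_at_alt] e by (meson half_gt_zero)
    obtain d2 where d2: "d2 > 0" "\<And>z. dist z x < d2 \<Longrightarrow> dist (D k z) (D k x) < e/2"
      using dc[of k] e unfolding continuous_on_iff by (meson UNIV_I half_gt_zero)
    show "\<exists>d>0. \<forall>y. norm (y - 0) < d \<longrightarrow>
        norm (f (x + ?P (insert k S) y) - f (x + ?P (insert k S) 0) - ?L (insert k S) (y - 0)) \<le> e * norm (y - 0)"
    proof (intro exI[of _ "min d1 d2"] conjI allI impI)
      show "min d1 d2 > 0" using d1 d2 by simp
      fix y :: "real^'n" assume y: "norm (y - 0) < min d1 d2"
      define a where "a = x + ?P S y"
      have P0: "?P A 0 = 0" for A by (simp add: vec_eq_iff)
      have Pins: "?P (insert k S) y = ?P S y + y$k *\<^sub>R axis k 1"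
        using insert.hyps by (auto simp: vec_eq_iff axis_def)
      have Lins: "?L (insert k S) y = y$k * D k x + ?L S y"
        using insert.hyps by simp
      obtain z where z: "\<bar>z\<bar> \<le> \<bar>y$k\<bar>" "f (a + y$k *\<^sub>R axis k 1) - f (a + 0 *\<^sub>R axis k 1) = y$k * D k (a + z *\<^sub>R axis k 1)"
        using mvt_abs[of "\<lambda>s. f (a + s *\<^sub>R axis k 1)" "\<lambda>s. D k (a + s *\<^sub>R axis k 1)" "y$k"]
          c1_partial_step[OF pd] by blast
      have "norm ((a + z *\<^sub>R axis k 1) - x) \<le> norm y"
      proof (rule norm_le_componentwise_cart)
        fix i
        show "norm ((a + z *\<^sub>R axis k 1 - x) $ i) \<le> norm (y $ i)"
          using insert.hyps z(1) by (auto simp: a_def axis_def)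
      qed
      then have "dist (a + z *\<^sub>R axis k 1) x < d2" using y by (simp add: dist_norm)
      then have "\<bar>D k (a + z *\<^sub>R axis k 1) - D k x\<bar> \<le> e/2" using d2(2) by (smt (verit) dist_real_def)
      then have A: "\<bar>f (a + y$k *\<^sub>R axis k 1) - f a - y$k * D k x\<bar> \<le> e/2 * norm y"
      proof -
        assume h: "\<bar>D k (a + z *\<^sub>R axis k 1) - D k x\<bar> \<le> e/2"
        have "\<bar>f (a + y$k *\<^sub>R axis k 1) - f a - y$k * D k x\<bar> = \<bar>y$k\<bar> * \<bar>D k (a + z *\<^sub>R axis k 1) - D k x\<bar>"
          using z(2) by (simp add: algebra_simps abs_mult[symmetric])
        also have "\<dots> \<le> norm y * (e/2)"
          using h component_le_norm_cart[of y k] by (intro mult_mono) auto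
        finally show ?thesis by (simp add: mult.commute)
      qed
      have B: "\<bar>f a - f x - ?L S y\<bar> \<le> e/2 * norm y"
        using d1(2)[of y] y by (simp add: a_def P0)
      have "f (x + ?P (insert k S) y) - f (x + ?P (insert k S) 0) - ?L (insert k S) (y - 0)
          = (f (a + y$k *\<^sub>R axis k 1) - f a - y$k * D k x) + (f a - f x - ?L S y)"
        unfolding Pins Lins P0 using insert.hyps by (simp add: a_def algebra_simps)
      then have "\<bar>f (x + ?P (insert k S) y) - f (x + ?P (insert k S) 0) - ?L (insert k S) (y - 0)\<bar> \<le> e/2 * norm y + e/2 * norm y"
        using A B by linarith
      then show "norm (f (x + ?P (insert k S) y) - f (x + ?P (insert k S) 0) - ?L (insert k S) (y - 0)) \<le> e * norm (y - 0)"
        by simp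
    qed
  qed
qed

lemma c1_diff:
  fixes f :: "real^'n \<Rightarrow> real"
  assumes pd: "\<And>i x. ((\<lambda>s. f (x + s *\<^sub>R axis i 1)) has_real_derivative D i x) (at 0)"
    and dc: "\<And>i. continuous_on UNIV (D i)"
  shows "(f has_derivative (\<lambda>h. \<Sum>i\<in>UNIV. h$i * D i x)) (at x)"
proof -
  have "((\<lambda>h. f (x + h)) has_derivative (\<lambda>h. \<Sum>i\<in>UNIV. h$i * D i x)) (at 0)"
    using c1_diff_induct[OF pd dc, of x UNIV] by simp
  then have H: "((\<lambda>h. f (x + h)) has_derivative (\<lambda>h. \<Sum>i\<in>UNIV. h$i * D i x)) (at ((\<lambda>y. y - x) x))" by simp
  have D1: "((\<lambda>y. y - x) has_derivative (\<lambda>h. h)) (at x)"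
    by (auto intro!: derivative_eq_intros)
  from has_derivative_compose[OF D1 H] show ?thesis by simp
qed



lemma smooth_cont:
  assumes "smooth_on_01 f"
  shows "continuous_on {0..1} f"
proof -
  obtain F where F: "\<forall>t\<in>{0..1}. F 0 t = f t"
    "\<And>k t. t \<in> {0..1} \<Longrightarrow> (F k has_vector_derivative F (Suc k) t) (at t within {0..1})"
    using assms unfolding smooth_on_01_def by blast
  have "continuous_on {0..1} (F 0)"
    unfolding continuous_on_eq_continuous_within
    using F(2) has_vector_derivative_continuous by blast
  then show ?thesis using F(1) continuous_on_eq by blast
qed

lemma lift_cont:
  assumes "continuous_on S k"
  shows "continuous_on (UNIV \<times> S) (\<lambda>z. k (snd z))"
  by (rule continuous_on_compose2[OF assms continuous_on_snd]) auto

lemma smooth_zero: "smooth_on_01 (\<lambda>t. 0)"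
  unfolding smooth_on_01_def by (intro exI[of _ "\<lambda>k t. 0"]) auto

lemma integral_scaleR_const:
  fixes c :: "'a::real_normed_vector"
  assumes "f integrable_on S"
  shows "integral S (\<lambda>t. f t *\<^sub>R c) = integral S f *\<^sub>R c"
  using has_integral_scaleR_left[OF integrable_integral[OF assms], of c] by (rule integral_unique)

lemma deriv_cont:
  assumes "\<And>t. t \<in> S \<Longrightarrow> (f has_vector_derivative f' t) (at t within S)"
  shows "continuous_on S f"
  unfolding continuous_on_eq_continuous_within
  using assms has_vector_derivative_continuous by blast



theorem proposition1:
  fixes g :: "real^'n \<Rightarrow> real^'m"
    and q0 qN :: "real^'n"
    and u :: "real \<Rightarrow> real^'n" and lam :: "real \<Rightarrow> real^'m"
  assumes "CARD('m) \<le> CARD('n)"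
    and "smooth_map g"
    and "\<forall>x. g x = 0 \<longrightarrow> rank (jacobian g x) = CARD('m)"
    and "g q0 = 0" and "g qN = 0"
    and "optimal_control g q0 qN u lam"
  shows "\<exists>p :: real \<Rightarrow> real^'n.
           (\<forall>t\<in>{0..1}.
              (state q0 u has_vector_derivative u t) (at t within {0..1}) \<and>
              (p has_vector_derivative - (transpose (jacobian g (state q0 u t)) *v lam t))
                 (at t within {0..1}) \<and>
              g (state q0 u t) = 0 \<and> p t = u t) \<and>
           state q0 u 0 = q0 \<and> state q0 u 1 = qN"
proof -
  have adm: "admissible q0 qN u lam" and var: "\<forall>v mu. smooth_on_01 v \<and> smooth_on_01 mu \<and> integral {0..1} v = 0 \<longrightarrow>
        ((\<lambda>e. cost g q0 (\<lambda>t. u t + e *\<^sub>R v t) (\<lambda>t. lam t + e *\<^sub>R mu t)) has_real_derivative 0) (at 0)"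
    using assms(6) unfolding optimal_control_def by auto
  have su: "smooth_on_01 u" and sl: "smooth_on_01 lam" and qN: "state q0 u 1 = qN"
    using adm unfolding admissible_def by auto
  have uc: "continuous_on {0..1} u" using smooth_cont[OF su] .
  have lc: "continuous_on {0..1} lam" using smooth_cont[OF sl] .
  define Q where "Q = state q0 u"
  have Qd: "(Q has_vector_derivative u t) (at t within {0..1})" if t: "t \<in> {0..1}" for t
  proof -
    have "((\<lambda>t. q0 + integral {0..t} u) has_vector_derivative 0 + u t) (at t within {0..1})"
      by (rule has_vector_derivative_add[OF has_vector_derivative_const integral_has_vector_derivative[OF uc t]])
    then show ?thesis by (simp add: Q_def state_def[abs_def])
  qed
  have Qc: "continuous_on {0..1} Q" by (rule deriv_cont[OF Qd])
  have "\<forall>j i. \<exists>Dji. (\<forall>x. ((\<lambda>s. g (x + s *\<^sub>R axis i 1) $ j) has_real_derivative Dji x) (at 0)) \<and> continuous_on UNIV Dji"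
  proof (intro allI)
    fix j i
    have "Ck_scalar (Suc (Suc 0)) (\<lambda>x. g x $ j)" using assms(2) unfolding smooth_map_def by blast
    then show "\<exists>Dji. (\<forall>x. ((\<lambda>s. g (x + s *\<^sub>R axis i 1) $ j) has_real_derivative Dji x) (at 0)) \<and> continuous_on UNIV Dji"
      by (simp only: Ck_scalar.simps) blast
  qed
  then obtain D where D: "\<And>j i x. ((\<lambda>s. g (x + s *\<^sub>R axis i 1) $ j) has_real_derivative D j i x) (at 0)"
      "\<And>j i. continuous_on UNIV (D j i)"
    by metis
  define L where "L x = (\<lambda>h::real^'n. (\<chi> j. \<Sum>i\<in>UNIV. h$i * D j i x) :: real^'m)" for x
  have gd: "(g has_derivative L x) (at x)" for x
  proof -
    have cj: "((\<lambda>y. g y $ j) has_derivative (\<lambda>h. \<Sum>i\<in>UNIV. h$i * D j i x)) (at x)" for j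
      by (rule c1_diff) (use D in auto)
    show "(g has_derivative L x) (at x)"
      unfolding has_derivative_componentwise_within[of g "L x" x UNIV]
      using cj by (auto simp: Basis_vec_def L_def inner_axis)
  qed
  have jac: "jacobian g x $ j $ i = D j i x" for x j i
  proof -
    have "frechet_derivative g (at x) = L x" using frechet_derivative_at[OF gd[of x]] by simp
    then show ?thesis unfolding jacobian_def
      by (simp add: matrix_def L_def axis_def if_distrib[where f="\<lambda>a. a * _"] cong: if_cong)
  qed
  have gcont: "continuous_on UNIV g"
    using gd has_derivative_continuous continuous_at_imp_continuous_on by blast
  have gQc: "continuous_on {0..1} (\<lambda>t. g (Q t))"
    by (rule continuous_on_compose2[OF gcont Qc]) auto
  have g0: "\<forall>t\<in>{0..1}. g (Q t) $ j = 0" for j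
  proof (rule poly_orth)
    show "continuous_on {0..1} (\<lambda>t. g (Q t) $ j)" by (intro continuous_intros gQc)
    fix p :: "real \<Rightarrow> real" assume p: "real_polynomial_function p"
    have pc: "continuous_on {0..1} p"
      using p continuous_on_polymonial_function real_polynomial_function_eq by blast
    define mu where "mu t = p t *\<^sub>R (axis j 1 :: real^'m)" for t
    have smu: "smooth_on_01 mu" unfolding mu_def by (rule poly_smooth[OF p])
    have D0: "((\<lambda>e. cost g q0 (\<lambda>t. u t + e *\<^sub>R 0) (\<lambda>t. lam t + e *\<^sub>R mu t)) has_real_derivative 0) (at 0)"
      using var[rule_format, of "\<lambda>t. 0" mu] smu smooth_zero by simp
    define A where "A t = (1/2) * (norm (u t))\<^sup>2 - g (Q t) \<bullet> lam t" for t
    define f where "f e t = A t - e * (p t * g (Q t) $ j)" for e t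
    have Ac: "continuous_on {0..1} A" unfolding A_def by (intro continuous_intros uc lc gQc)
    have eq: "cost g q0 (\<lambda>t. u t + e *\<^sub>R 0) (\<lambda>t. lam t + e *\<^sub>R mu t) = integral (cbox 0 1) (f e)" for e
      unfolding cost_def box_real(2)
      by (rule integral_cong) (simp add: f_def A_def Q_def mu_def inner_add_right inner_axis)
    have "((\<lambda>e. integral (cbox 0 1) (f e)) has_field_derivative integral (cbox 0 1) (\<lambda>t. - (p t * g (Q t) $ j))) (at 0 within UNIV)"
    proof (rule leibniz_rule_field_derivative)
      fix e :: real and t :: real
      show "((\<lambda>e. f e t) has_field_derivative - (p t * g (Q t) $ j)) (at e within UNIV)"
        unfolding f_def by (auto intro!: derivative_eq_intros)
    next
      fix e :: real
      show "f e integrable_on cbox 0 1" unfolding box_real(2) f_def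
        by (intro integrable_continuous_interval continuous_intros Ac pc gQc)
    next
      have "continuous_on (UNIV \<times> {0..1}) (\<lambda>z. - (p (snd z) * g (Q (snd z)) $ j))"
        by (rule lift_cont[where k="\<lambda>t. - (p t * g (Q t) $ j)"]) (intro continuous_intros pc gQc)
      then show "continuous_on (UNIV \<times> cbox 0 1) (\<lambda>(e, t). - (p t * g (Q t) $ j))"
        by (simp add: case_prod_beta box_real(2))
    qed auto
    then have "((\<lambda>e. cost g q0 (\<lambda>t. u t + e *\<^sub>R 0) (\<lambda>t. lam t + e *\<^sub>R mu t)) has_real_derivative integral {0..1} (\<lambda>t. - (p t * g (Q t) $ j))) (at 0)"
      unfolding eq box_real(2) by simp
    from DERIV_unique[OF D0 this] show "integral {0..1} (\<lambda>t. p t * g (Q t) $ j) = 0"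
      by (simp add: integral_neg)
  qed
  have g0': "g (Q t) = 0" if "t \<in> {0..1}" for t
    using g0 that by (simp add: vec_eq_iff)
  define w where "w i t = (\<Sum>j\<in>UNIV. D j i (Q t) * lam t $ j)" for i t
  have DQc: "continuous_on {0..1} (\<lambda>t. D j i (Q t))" for j i
    by (rule continuous_on_compose2[OF D(2) Qc]) auto
  have wc: "continuous_on {0..1} (w i)" for i
    unfolding w_def by (intro continuous_intros DQc lc)
  define Wi where "Wi i t = integral {0..t} (w i)" for i t
  have Wd: "(Wi i has_vector_derivative w i t) (at t within {0..1})" if "t \<in> {0..1}" for i t
    unfolding Wi_def[abs_def] by (rule integral_has_vector_derivative[OF wc that])
  have Wc: "continuous_on {0..1} (Wi i)" for i by (rule deriv_cont[OF Wd])
  have key: "\<forall>t\<in>{0..1}. u t $ i + Wi i t = integral {0..1} (\<lambda>t. u t $ i + Wi i t)" for i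
  proof (rule const_orth)
    show "continuous_on {0..1} (\<lambda>t. u t $ i + Wi i t)" by (intro continuous_intros uc Wc)
    fix \<phi> :: "real \<Rightarrow> real" assume \<phi>: "real_polynomial_function \<phi>" and \<phi>0: "integral {0..1} \<phi> = 0"
    have \<phi>c: "continuous_on {0..1} \<phi>"
      using \<phi> continuous_on_polymonial_function real_polynomial_function_eq by blast
    define \<Phi> where "\<Phi> t = integral {0..t} \<phi>" for t
    have \<Phi>d: "(\<Phi> has_vector_derivative \<phi> t) (at t within {0..1})" if "t \<in> {0..1}" for t
      unfolding \<Phi>_def[abs_def] by (rule integral_has_vector_derivative[OF \<phi>c that])
    have \<Phi>c: "continuous_on {0..1} \<Phi>" by (rule deriv_cont[OF \<Phi>d])
    define v where "v t = \<phi> t *\<^sub>R (axis i 1 :: real^'n)" for t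
    have sv: "smooth_on_01 v" unfolding v_def by (rule poly_smooth[OF \<phi>])
    have vc: "continuous_on {0..1} v" unfolding v_def by (intro continuous_intros \<phi>c)
    have iv: "integral {0..1} v = 0"
      unfolding v_def using integral_scaleR_const[OF integrable_continuous_interval[OF \<phi>c]] \<phi>0 by simp
    have D0: "((\<lambda>e. cost g q0 (\<lambda>t. u t + e *\<^sub>R v t) (\<lambda>t. lam t + e *\<^sub>R 0)) has_real_derivative 0) (at 0)"
      using var[rule_format, of v "\<lambda>t. 0"] sv smooth_zero iv by simp
    define f where "f e t = ((u t \<bullet> u t) + 2 * e * (\<phi> t * u t $ i) + e\<^sup>2 * (\<phi> t)\<^sup>2) / 2
        - (\<Sum>j\<in>UNIV. g (Q t + (e * \<Phi> t) *\<^sub>R axis i 1) $ j * lam t $ j)" for e t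
    define fx where "fx e t = (\<phi> t * u t $ i) + e * (\<phi> t)\<^sup>2
        - (\<Sum>j\<in>UNIV. D j i (Q t + (e * \<Phi> t) *\<^sub>R axis i 1) * \<Phi> t * lam t $ j)" for e t
    have eq: "cost g q0 (\<lambda>t. u t + e *\<^sub>R v t) (\<lambda>t. lam t + e *\<^sub>R 0) = integral (cbox 0 1) (f e)" for e
      unfolding cost_def box_real(2)
    proof (rule integral_cong)
      fix t :: real assume t: "t \<in> {0..1}"
      have sub: "{0..t} \<subseteq> {0..1}" using t by auto
      have iu: "u integrable_on {0..t}"
        by (rule integrable_continuous_interval[OF continuous_on_subset[OF uc sub]])
      have iv': "v integrable_on {0..t}"
        by (rule integrable_continuous_interval[OF continuous_on_subset[OF vc sub]])
      have i\<phi>: "\<phi> integrable_on {0..t}"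
        by (rule integrable_continuous_interval[OF continuous_on_subset[OF \<phi>c sub]])
      have "integral {0..t} (\<lambda>s. u s + e *\<^sub>R v s) = integral {0..t} u + e *\<^sub>R integral {0..t} v"
        using iu iv' by (simp add: integral_add integrable_cmul)
      also have "integral {0..t} v = \<Phi> t *\<^sub>R axis i 1"
        unfolding v_def \<Phi>_def by (rule integral_scaleR_const[OF i\<phi>])
      finally have st: "state q0 (\<lambda>t. u t + e *\<^sub>R v t) t = Q t + (e * \<Phi> t) *\<^sub>R axis i 1"
        by (simp add: state_def Q_def algebra_simps)
      have nn: "(norm (u t + e *\<^sub>R v t))\<^sup>2 = u t \<bullet> u t + 2 * e * (\<phi> t * u t $ i) + e\<^sup>2 * (\<phi> t)\<^sup>2"
        unfolding power2_norm_eq_inner v_def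
        by (simp add: inner_add_left inner_add_right inner_axis inner_axis_axis inner_commute[of "axis i 1" "u t"]
            algebra_simps power2_eq_square)
      show "1 / 2 * (norm (u t + e *\<^sub>R v t))\<^sup>2 - g (state q0 (\<lambda>t. u t + e *\<^sub>R v t) t) \<bullet> (lam t + e *\<^sub>R 0) = f e t"
        unfolding st nn f_def by (simp add: inner_vec_def)
    qed
    have gj: "((\<lambda>e. g (Q t + (e * \<Phi> t) *\<^sub>R axis i 1) $ j) has_real_derivative
          D j i (Q t + (e * \<Phi> t) *\<^sub>R axis i 1) * \<Phi> t) (at e)" for t e j
    proof (rule DERIV_chain2[where f="\<lambda>s. g (Q t + s *\<^sub>R axis i 1) $ j"])
      show "((\<lambda>s. g (Q t + s *\<^sub>R axis i 1) $ j) has_real_derivative D j i (Q t + (e * \<Phi> t) *\<^sub>R axis i 1)) (at (e * \<Phi> t))"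
        by (rule c1_partial_step[where f="\<lambda>y. g y $ j" and D="D j", OF D(1)])
      show "((\<lambda>e. e * \<Phi> t) has_real_derivative \<Phi> t) (at e)"
        by (auto intro!: derivative_eq_intros)
    qed
    have "((\<lambda>e. integral (cbox 0 1) (f e)) has_field_derivative integral (cbox 0 1) (fx 0)) (at 0 within UNIV)"
    proof (rule leibniz_rule_field_derivative)
      fix e :: real and t :: real
      have S: "((\<lambda>e. \<Sum>j\<in>UNIV. g (Q t + (e * \<Phi> t) *\<^sub>R axis i 1) $ j * lam t $ j) has_real_derivative
          (\<Sum>j\<in>UNIV. D j i (Q t + (e * \<Phi> t) *\<^sub>R axis i 1) * \<Phi> t * lam t $ j)) (at e)"
        by (rule DERIV_sum) (auto intro!: derivative_eq_intros gj)
      have P: "((\<lambda>e. ((u t \<bullet> u t) + 2 * e * (\<phi> t * u t $ i) + e\<^sup>2 * (\<phi> t)\<^sup>2) / 2) has_real_derivative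
          (\<phi> t * u t $ i) + e * (\<phi> t)\<^sup>2) (at e)"
        by (auto intro!: derivative_eq_intros simp: algebra_simps power2_eq_square)
      show "((\<lambda>e. f e t) has_field_derivative fx e t) (at e within UNIV)"
        unfolding f_def fx_def using DERIV_diff[OF P S] by simp
    next
      fix e :: real
      have c1: "continuous_on {0..1} (\<lambda>t. g (Q t + (e * \<Phi> t) *\<^sub>R axis i 1))"
        by (rule continuous_on_compose2[OF gcont]) (auto intro!: continuous_intros Qc \<Phi>c)
      show "f e integrable_on cbox 0 1" unfolding box_real(2) f_def
        by (intro integrable_continuous_interval continuous_intros uc \<phi>c c1 lc) auto
    next
      have c2: "continuous_on (UNIV \<times> {0..1}) (\<lambda>z. D j i (Q (snd z) + (fst z * \<Phi> (snd z)) *\<^sub>R axis i 1))" for j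
        by (rule continuous_on_compose2[OF D(2)]) (auto intro!: continuous_intros lift_cont Qc \<Phi>c)
      have "continuous_on (UNIV \<times> {0..1}) (\<lambda>z. fx (fst z) (snd z))"
        unfolding fx_def
        by (intro continuous_intros c2 lift_cont[OF \<phi>c] lift_cont[OF \<Phi>c] lift_cont[OF lc]
            lift_cont[OF continuous_on_component[OF uc]])
      then show "continuous_on (UNIV \<times> cbox 0 1) (\<lambda>(e, t). fx e t)"
        by (simp add: case_prod_beta box_real(2))
    qed auto
    then have "((\<lambda>e. cost g q0 (\<lambda>t. u t + e *\<^sub>R v t) (\<lambda>t. lam t + e *\<^sub>R 0)) has_real_derivative integral {0..1} (fx 0)) (at 0)"
      unfolding eq box_real(2) by simp
    from DERIV_unique[OF D0 this] have I1: "integral {0..1} (fx 0) = 0" by simp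
    have I1': "integral {0..1} (\<lambda>t. \<phi> t * u t $ i - \<Phi> t * w i t) = 0"
    proof -
      have "fx 0 = (\<lambda>t. \<phi> t * u t $ i - \<Phi> t * w i t)"
        by (rule ext) (simp add: fx_def w_def sum_distrib_left algebra_simps)
      then show ?thesis using I1 by simp
    qed
    have PD: "((\<lambda>t. \<Phi> t * Wi i t) has_vector_derivative (\<phi> t * Wi i t + \<Phi> t * w i t)) (at t within {0..1})"
      if t: "t \<in> {0..1}" for t
    proof -
      have "((\<lambda>t. \<Phi> t * Wi i t) has_real_derivative (\<phi> t * Wi i t + w i t * \<Phi> t)) (at t within {0..1})"
        by (rule DERIV_mult[OF \<Phi>d[OF t, unfolded has_real_derivative_iff_has_vector_derivative[symmetric]]
              Wd[OF t, unfolded has_real_derivative_iff_has_vector_derivative[symmetric]]])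
      then show ?thesis by (simp add: has_real_derivative_iff_has_vector_derivative mult.commute)
    qed
    have "((\<lambda>t. \<phi> t * Wi i t + \<Phi> t * w i t) has_integral (\<Phi> 1 * Wi i 1 - \<Phi> 0 * Wi i 0)) {0..1}"
      by (rule fundamental_theorem_of_calculus) (auto intro: PD)
    moreover have "\<Phi> 1 = 0" "\<Phi> 0 = 0" using \<phi>0 by (auto simp: \<Phi>_def)
    ultimately have I2: "integral {0..1} (\<lambda>t. \<phi> t * Wi i t + \<Phi> t * w i t) = 0"
      by (simp add: integral_unique)
    have i1: "(\<lambda>t. \<phi> t * u t $ i - \<Phi> t * w i t) integrable_on {0..1}"
      by (intro integrable_continuous_interval continuous_intros \<phi>c uc \<Phi>c wc)
    have i2: "(\<lambda>t. \<phi> t * Wi i t + \<Phi> t * w i t) integrable_on {0..1}"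
      by (intro integrable_continuous_interval continuous_intros \<phi>c Wc \<Phi>c wc)
    have "integral {0..1} (\<lambda>t. \<phi> t * (u t $ i + Wi i t))
        = integral {0..1} (\<lambda>t. (\<phi> t * u t $ i - \<Phi> t * w i t) + (\<phi> t * Wi i t + \<Phi> t * w i t))"
      by (rule integral_cong) (simp add: algebra_simps)
    also have "\<dots> = 0" using integral_add[OF i1 i2] I1' I2 by simp
    finally show "integral {0..1} (\<lambda>t. \<phi> t * (u t $ i + Wi i t)) = 0" .
  qed
  define c where "c = (\<chi> i. integral {0..1} (\<lambda>t. u t $ i + Wi i t))"
  define wv where "wv t = transpose (jacobian g (Q t)) *v lam t" for t
  have wv_eq: "wv = (\<lambda>t. \<chi> i. w i t)"
    by (rule ext) (simp add: wv_def w_def vec_eq_iff matrix_vector_mult_def transpose_def jac)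
  have wvc: "continuous_on {0..1} wv" unfolding wv_eq by (intro continuous_intros wc)
  define W where "W t = integral {0..t} wv" for t
  have Wcomp: "W t $ i = Wi i t" if t: "t \<in> {0..1}" for t i
  proof -
    have "wv integrable_on {0..t}"
      by (rule integrable_continuous_interval[OF continuous_on_subset[OF wvc]]) (use t in auto)
    then have "W t $ i = integral {0..t} (\<lambda>s. wv s $ i)" unfolding W_def by simp
    also have "\<dots> = Wi i t" unfolding Wi_def by (simp add: wv_eq)
    finally show ?thesis .
  qed
  show ?thesis
  proof (intro exI[of _ "\<lambda>t. c - W t"] conjI ballI)
    fix t :: real assume t: "t \<in> {0..1}"
    show "(state q0 u has_vector_derivative u t) (at t within {0..1})" using Qd[OF t] by (simp add: Q_def)
    have "((\<lambda>t. c - W t) has_vector_derivative 0 - wv t) (at t within {0..1})"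
      unfolding W_def[abs_def]
      by (rule has_vector_derivative_diff[OF has_vector_derivative_const integral_has_vector_derivative[OF wvc t]])
    then show "((\<lambda>t. c - W t) has_vector_derivative - (transpose (jacobian g (state q0 u t)) *v lam t)) (at t within {0..1})"
      by (simp add: wv_def Q_def)
    show "g (state q0 u t) = 0" using g0' t by (simp add: Q_def)
    have "c $ i - W t $ i = u t $ i" for i
    proof -
      have "u t $ i + Wi i t = integral {0..1} (\<lambda>t. u t $ i + Wi i t)" using key[of i] t by blast
      then show ?thesis by (simp add: c_def Wcomp[OF t])
    qed
    then show "c - W t = u t" by (simp add: vec_eq_iff)
  next
    show "state q0 u 0 = q0" by (simp add: state_def)
  next
    show "state q0 u 1 = qN" by (rule qN)
  qed
qed

end
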